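(* Let $G$ be a connected graph with at least $2$ vertices. Suppose that either $G$ is co-connected, or $G$ has a dominating vertex $x$ such that $G-x$ is connected and co-connected. Then there exists a connecting hypergraph $H$ of $G$ of minimum cost such that $G[E]$ is co-connected for every $E\in H$.
   Context: All graphs are finite, simple and undirected. $G[X]$ denotes the subgraph induced by $X\subseteq V(G)$, and $G-x$ the subgraph induced by $V(G)\setminus\{x\}$. The complement $\bar G$ has vertex set $V(G)$ and an edge $xy$ ($x\neq y$) iff $xy\notin E(G)$; $G$ is co-connected if $\bar G$ is connected. A vertex is dominating if it is adjacent to all other vertices. A connecting hypergraph of $G$ is a set $H$ of subsets of $V(G)$ such that every $E\in H$ satisfies $|E|\ge 2$ and $G[E]$ is connected, and for every pair of distinct non-adjacent vertices $u,v$ of $G$ there exists $E\in H$ with $u,v\in E$. Its cost is $\mathrm{cost}(H)=\sum_{E\in H}(|E|-2)$. *)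

theory Defs
  imports Main
begin

text \<open>A finite simple graph: finite vertex set V, symmetric irreflexive adjacency Adj
 (only its restriction to V matters).\<close>

definition simple_graph :: "'a set \<Rightarrow> ('a \<Rightarrow> 'a \<Rightarrow> bool) \<Rightarrow> bool" where
  "simple_graph V Adj \<longleftrightarrow> finite V \<and> (\<forall>u v. Adj u v \<longrightarrow> Adj v u) \<and> (\<forall>u. \<not> Adj u u)"

definition connected_on :: "('a \<Rightarrow> 'a \<Rightarrow> bool) \<Rightarrow> 'a set \<Rightarrow> bool" where
  "connected_on Adj X \<longleftrightarrow>
     (\<forall>u\<in>X. \<forall>v\<in>X. (\<lambda>a b. a \<in> X \<and> b \<in> X \<and> Adj a b)\<^sup>*\<^sup>* u v)"

definition compl_adj :: "('a \<Rightarrow> 'a \<Rightarrow> bool) \<Rightarrow> 'a \<Rightarrow> 'a \<Rightarrow> bool" where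
  "compl_adj Adj u v \<longleftrightarrow> u \<noteq> v \<and> \<not> Adj u v"

definition coconnected_on :: "('a \<Rightarrow> 'a \<Rightarrow> bool) \<Rightarrow> 'a set \<Rightarrow> bool" where
  "coconnected_on Adj X \<longleftrightarrow> connected_on (compl_adj Adj) X"

definition dominating :: "'a set \<Rightarrow> ('a \<Rightarrow> 'a \<Rightarrow> bool) \<Rightarrow> 'a \<Rightarrow> bool" where
  "dominating V Adj x \<longleftrightarrow> x \<in> V \<and> (\<forall>y\<in>V. y \<noteq> x \<longrightarrow> Adj x y)"

definition connecting_hypergraph :: "'a set \<Rightarrow> ('a \<Rightarrow> 'a \<Rightarrow> bool) \<Rightarrow> 'a set set \<Rightarrow> bool" where
  "connecting_hypergraph V Adj H \<longleftrightarrow>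
     (\<forall>E\<in>H. E \<subseteq> V \<and> 2 \<le> card E \<and> connected_on Adj E) \<and>
     (\<forall>u\<in>V. \<forall>v\<in>V. u \<noteq> v \<and> \<not> Adj u v \<longrightarrow> (\<exists>E\<in>H. u \<in> E \<and> v \<in> E))"

definition hcost :: "'a set set \<Rightarrow> nat" where
  "hcost H = (\<Sum>E\<in>H. card E - 2)"

definition min_cost_connecting_hypergraph :: "'a set \<Rightarrow> ('a \<Rightarrow> 'a \<Rightarrow> bool) \<Rightarrow> 'a set set \<Rightarrow> bool" where
  "min_cost_connecting_hypergraph V Adj H \<longleftrightarrow>
     connecting_hypergraph V Adj H \<and>
     (\<forall>H'. connecting_hypergraph V Adj H' \<longrightarrow> hcost H \<le> hcost H')"

end

theory Submission
  imports Defs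
begin

lemma rtranclp_sym_rev:
  assumes "\<And>a b. r a b \<Longrightarrow> r b a" "r\<^sup>*\<^sup>* a b" shows "r\<^sup>*\<^sup>* b a"
  using assms(2) by induction (auto intro: converse_rtranclp_into_rtranclp assms(1))

lemma exit_lemma: "r\<^sup>*\<^sup>* a b \<Longrightarrow> P a \<Longrightarrow> \<not> P b \<Longrightarrow> \<exists>s t. r s t \<and> P s \<and> \<not> P t"
  by (induction rule: rtranclp_induct) blast+

lemma rtranclp_mono_sub:
  assumes "\<And>a b. r a b \<Longrightarrow> r' a b" "r\<^sup>*\<^sup>* x z" shows "r'\<^sup>*\<^sup>* x z"
  using assms(2) by (induction rule: rtranclp_induct) (auto intro: rtranclp.rtrancl_into_rtrancl assms(1))

lemma finite_H:
  assumes "simple_graph V Adj" "connecting_hypergraph V Adj H" shows "finite H"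
proof -
  have "H \<subseteq> Pow V" using assms(2) unfolding connecting_hypergraph_def by auto
  moreover have "finite V" using assms(1) unfolding simple_graph_def by auto
  ultimately show ?thesis using finite_subset finite_Pow_iff by metis
qed

lemma sum_minus2:
  assumes "finite S" "\<forall>F\<in>S. 2 \<le> card F"
  shows "hcost S + 2 * card S = sum card S"
  using assms unfolding hcost_def by (induction S rule: finite_induct) auto

lemma hcost_split: "finite H \<Longrightarrow> X \<subseteq> H \<Longrightarrow> hcost H = hcost (H - X) + hcost X"
  unfolding hcost_def by (metis sum.subset_diff)

lemma hcost_insert_le: "finite H \<Longrightarrow> hcost (insert M H) \<le> (card M - 2) + hcost H"
  unfolding hcost_def by (simp add: sum.insert_if)

lemma star_connected:
  assumes "u \<in> X" "\<forall>t\<in>X. t \<noteq> u \<longrightarrow> Adj u t" "\<forall>a b. Adj a b \<longrightarrow> Adj b a"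
  shows "connected_on Adj X"
  unfolding connected_on_def
proof (intro ballI)
  fix s t assume s: "s \<in> X" and t: "t \<in> X"
  let ?r = "\<lambda>a b. a \<in> X \<and> b \<in> X \<and> Adj a b"
  have 1: "?r\<^sup>*\<^sup>* s u"
  proof (cases "s = u")
    case False then have "?r s u" using assms s by auto
    then show ?thesis by auto
  qed auto
  have 2: "?r\<^sup>*\<^sup>* u t"
  proof (cases "t = u")
    case False then have "?r u t" using assms t by auto
    then show ?thesis by auto
  qed auto
  show "?r\<^sup>*\<^sup>* s t" using 1 2 by auto
qed

lemma core:
  assumes sg: "simple_graph V Adj" and ch: "connecting_hypergraph V Adj H"
    and EH: "E \<in> H" and CE: "C \<subseteq> E" and cC: "c \<in> C" and yV: "y \<in> V" and yE: "y \<notin> E"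
    and cy: "compl_adj Adj c y"
  shows "\<exists>S M. S \<subseteq> H \<and> E \<notin> S \<and> S \<noteq> {} \<and> M \<subseteq> V \<and> C \<subseteq> M \<and> \<Union>S \<subseteq> M \<and>
     connected_on Adj M \<and> 2 \<le> card M \<and> card M + 2 * card S \<le> card C + sum card S + 1"
proof -
  have finV: "finite V" and sym: "\<forall>u v. Adj u v \<longrightarrow> Adj v u" using sg unfolding simple_graph_def by auto
  have Hprops: "\<forall>F\<in>H. F \<subseteq> V \<and> 2 \<le> card F \<and> connected_on Adj F"
    and cover: "\<forall>u\<in>V. \<forall>v\<in>V. u \<noteq> v \<and> \<not> Adj u v \<longrightarrow> (\<exists>F\<in>H. u \<in> F \<and> v \<in> F)"
    using ch unfolding connecting_hypergraph_def by auto
  have EV: "E \<subseteq> V" using Hprops EH by auto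
  have finH: "finite H" using finite_H[OF sg ch] .
  have cV: "c \<in> V" using cC CE EV by auto
  obtain F where FH: "F \<in> H" and cF: "c \<in> F" and yF: "y \<in> F"
    using cover cV yV cy unfolding compl_adj_def by blast
  define T where "T = {a \<in> C. \<forall>f\<in>F. a \<noteq> f \<and> \<not> Adj a f}"
  have "\<forall>a\<in>T. \<exists>G\<in>H. a \<in> G \<and> y \<in> G"
  proof
    fix a assume aT: "a \<in> T"
    hence "a \<in> V" "a \<noteq> y" "\<not> Adj a y" using CE EV yF yE unfolding T_def by auto
    thus "\<exists>G\<in>H. a \<in> G \<and> y \<in> G" using cover yV by blast
  qed
  then have ex: "\<forall>a\<in>T. \<exists>G. G \<in> H \<and> a \<in> G \<and> y \<in> G" by blast
  then obtain g where g: "\<forall>a\<in>T. g a \<in> H \<and> a \<in> g a \<and> y \<in> g a"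
    using bchoice[OF ex] by blast
  define R where "R = g ` T"
  define S where "S = insert F R"
  define M where "M = C \<union> \<Union>S"
  have finC: "finite C" by (rule finite_subset[OF _ finV]) (use CE EV in auto)
  have finT: "finite T" using finC unfolding T_def by auto
  have finR: "finite R" unfolding R_def using finT by auto
  have RH: "R \<subseteq> H" using g unfolding R_def by auto
  have FR: "F \<notin> R"
  proof
    assume "F \<in> R"
    then obtain a where "a \<in> T" "F = g a" unfolding R_def by auto
    then show False using g unfolding T_def by auto
  qed
  have SH: "S \<subseteq> H" using RH FH unfolding S_def by auto
  have yS: "\<forall>G\<in>S. y \<in> G" using g yF unfolding S_def R_def by auto
  have ES: "E \<notin> S" using yS yE by auto
  have MV: "M \<subseteq> V" using SH Hprops CE EV unfolding M_def by blast
  have finM: "finite M" by (rule finite_subset[OF MV finV])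
  have cM: "c \<in> M" "y \<in> M" using cC yF unfolding M_def S_def by auto
  have cy': "c \<noteq> y" using cy unfolding compl_adj_def by auto
  have card2: "2 \<le> card M"
  proof -
    have "{c, y} \<subseteq> M" using cM by auto
    then have "card {c, y} \<le> card M" using finM card_mono by blast
    then show ?thesis using cy' by auto
  qed
  let ?r = "\<lambda>a b. a \<in> M \<and> b \<in> M \<and> Adj a b"
  have rsym: "\<And>a b. ?r a b \<Longrightarrow> ?r b a" using sym by auto
  have inS: "?r\<^sup>*\<^sup>* s y" if "G \<in> S" "s \<in> G" for G s
  proof -
    have "connected_on Adj G" using Hprops SH that by auto
    then have path: "(\<lambda>a b. a \<in> G \<and> b \<in> G \<and> Adj a b)\<^sup>*\<^sup>* s y" using that yS unfolding connected_on_def by auto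
    have "G \<subseteq> M" using that unfolding M_def by auto
    then have sub: "\<And>a b. a \<in> G \<and> b \<in> G \<and> Adj a b \<Longrightarrow> ?r a b" by auto
    show ?thesis by (rule rtranclp_mono_sub[OF sub path])
  qed
  have toy: "?r\<^sup>*\<^sup>* m y" if "m \<in> M" for m
  proof (cases "m \<in> \<Union>S")
    case True then show ?thesis using inS by auto
  next
    case False
    then have mC: "m \<in> C" using that unfolding M_def by auto
    have "m \<notin> T"
    proof
      assume "m \<in> T"
      then have "m \<in> g m" "g m \<in> S" using g unfolding S_def R_def by auto
      then show False using False by auto
    qed
    then obtain f where fF: "f \<in> F" and "m = f \<or> Adj m f" using mC unfolding T_def by auto
    moreover have "m \<noteq> f" using False fF unfolding S_def by auto
    ultimately have "Adj m f" by auto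
    moreover have "f \<in> M" using fF unfolding M_def S_def by auto
    ultimately have "?r m f" using that by auto
    moreover have "?r\<^sup>*\<^sup>* f y" using inS[of F f] fF unfolding S_def by auto
    ultimately show ?thesis by (rule converse_rtranclp_into_rtranclp)
  qed
  have conM: "connected_on Adj M" unfolding connected_on_def
  proof (intro ballI)
    fix s t assume "s \<in> M" "t \<in> M"
    then have "?r\<^sup>*\<^sup>* s y" "?r\<^sup>*\<^sup>* y t" using toy rtranclp_sym_rev[of ?r, OF rsym] by auto
    then show "?r\<^sup>*\<^sup>* s t" by auto
  qed
  have finF: "finite F" by (rule finite_subset[OF _ finV]) (use FH Hprops in auto)
  have c1: "card (C \<union> F) + 1 \<le> card C + card F"
  proof -
    have "card C + card F = card (C \<union> F) + card (C \<inter> F)" using card_Un_Int[OF finC finF] .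
    moreover have "card (C \<inter> F) \<ge> 1" using cC cF finC
      by (metis IntI One_nat_def Suc_leI card_gt_0_iff empty_iff finite_Int)
    ultimately show ?thesis by linarith
  qed
  have c2: "card (G - (C \<union> F)) + 2 \<le> card G" if GR: "G \<in> R" for G
  proof -
    obtain a where aT: "a \<in> T" and Gd: "G = g a" using GR unfolding R_def by auto
    have finG: "finite G" by (rule finite_subset[OF _ finV]) (use GR RH Hprops in auto)
    have aC: "a \<in> C" using aT unfolding T_def by auto
    have "a \<noteq> y" using aC CE yE by auto
    have sub: "{a, y} \<subseteq> G \<inter> (C \<union> F)" using g aT Gd aC yF by auto
    have fI: "finite (G \<inter> (C \<union> F))" using finG by simp
    have "card {a, y} \<le> card (G \<inter> (C \<union> F))" by (rule card_mono[OF fI sub])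
    then have "2 \<le> card (G \<inter> (C \<union> F))" using \<open>a \<noteq> y\<close> by simp
    moreover have "card (G - (C \<union> F)) = card G - card (G \<inter> (C \<union> F))"
      by (rule card_Diff_subset_Int[OF fI])
    moreover have "card (G \<inter> (C \<union> F)) \<le> card G" using finG by (simp add: card_mono)
    ultimately show ?thesis by linarith
  qed
  have c3: "card (\<Union>R - (C \<union> F)) \<le> (\<Sum>G\<in>R. card (G - (C \<union> F)))"
  proof -
    have "\<Union>R - (C \<union> F) = (\<Union>G\<in>R. G - (C \<union> F))" by auto
    then show ?thesis using card_UN_le[OF finR, of "\<lambda>G. G - (C \<union> F)"] by simp
  qed
  have c4: "card M \<le> card (C \<union> F) + card (\<Union>R - (C \<union> F))"
  proof -
    have "M = (C \<union> F) \<union> (\<Union>R - (C \<union> F))" unfolding M_def S_def by auto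
    then show ?thesis using card_Un_le by metis
  qed
  have c5: "(\<Sum>G\<in>R. card (G - (C \<union> F))) + 2 * card R \<le> (\<Sum>G\<in>R. card G)"
  proof -
    have "(\<Sum>G\<in>R. card (G - (C \<union> F)) + 2) \<le> (\<Sum>G\<in>R. card G)"
      using c2 by (intro sum_mono) auto
    moreover have "(\<Sum>G\<in>R. card (G - (C \<union> F)) + 2) = (\<Sum>G\<in>R. card (G - (C \<union> F))) + (\<Sum>G\<in>R. 2)"
      by (rule sum.distrib)
    moreover have "(\<Sum>G\<in>R. (2::nat)) = 2 * card R" by simp
    ultimately show ?thesis by linarith
  qed
  have cS: "card S = card R + 1" using FR finR unfolding S_def by simp
  have sS: "sum card S = card F + sum card R" using FR finR unfolding S_def by simp
  have "card M + 2 * card S \<le> card C + sum card S + 1"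
    using c1 c3 c4 c5 cS sS by linarith
  moreover have "S \<noteq> {}" unfolding S_def by auto
  moreover have "C \<subseteq> M" "\<Union>S \<subseteq> M" unfolding M_def by auto
  ultimately show ?thesis using SH ES MV conM card2 by blast
qed


lemma remove_edge:
  assumes sg: "simple_graph V Adj" and ch: "connecting_hypergraph V Adj H" and EH: "E \<in> H"
    and noc: "\<forall>s\<in>E. \<forall>t\<in>E. \<not> compl_adj Adj s t"
  shows "\<exists>H'. connecting_hypergraph V Adj H' \<and> hcost H' \<le> hcost H \<and> card H' < card H"
proof -
  have finH: "finite H" using finite_H[OF sg ch] .
  have Hprops: "\<forall>F\<in>H. F \<subseteq> V \<and> 2 \<le> card F \<and> connected_on Adj F"
    and cover: "\<forall>u\<in>V. \<forall>v\<in>V. u \<noteq> v \<and> \<not> Adj u v \<longrightarrow> (\<exists>F\<in>H. u \<in> F \<and> v \<in> F)"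
    using ch unfolding connecting_hypergraph_def by auto
  have "connecting_hypergraph V Adj (H - {E})"
    unfolding connecting_hypergraph_def
  proof (rule conjI)
    show "\<forall>G\<in>H - {E}. G \<subseteq> V \<and> 2 \<le> card G \<and> connected_on Adj G"
    proof
    fix G assume "G \<in> H - {E}"
    then show "G \<subseteq> V \<and> 2 \<le> card G \<and> connected_on Adj G" using Hprops by auto
    qed
  next
    show "\<forall>u\<in>V. \<forall>v\<in>V. u \<noteq> v \<and> \<not> Adj u v \<longrightarrow> (\<exists>F\<in>H - {E}. u \<in> F \<and> v \<in> F)"
    proof (intro ballI impI)
    fix u v assume "u \<in> V" "v \<in> V" "u \<noteq> v \<and> \<not> Adj u v"
    then obtain G where "G \<in> H" "u \<in> G" "v \<in> G" using cover by blast
    moreover have "G \<noteq> E" using noc \<open>u \<in> G\<close> \<open>v \<in> G\<close> \<open>u \<noteq> v \<and> \<not> Adj u v\<close>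
      unfolding compl_adj_def by auto
    ultimately show "\<exists>G\<in>H - {E}. u \<in> G \<and> v \<in> G" by auto
    qed
  qed
  moreover have "hcost (H - {E}) \<le> hcost H" using hcost_split[OF finH, of "{E}"] EH by auto
  moreover have "card (H - {E}) < card H" using card_Diff1_less[OF finH EH] .
  ultimately show ?thesis by blast
qed

lemma absorb:
  assumes sg: "simple_graph V Adj" and ch: "connecting_hypergraph V Adj H"
    and EH: "E \<in> H" and CE: "C \<subseteq> E" and wE: "w \<in> E" and wC: "w \<notin> C"
    and inC: "\<forall>s\<in>E. \<forall>t\<in>E. compl_adj Adj s t \<longrightarrow> s \<in> C \<and> t \<in> C"
    and cC: "c \<in> C" and yV: "y \<in> V" and yE: "y \<notin> E" and cy: "compl_adj Adj c y"
  shows "\<exists>H'. connecting_hypergraph V Adj H' \<and> hcost H' \<le> hcost H \<and> card H' < card H"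
proof -
  obtain S M where SH: "S \<subseteq> H" and ES: "E \<notin> S" and Sne: "S \<noteq> {}" and MV: "M \<subseteq> V"
    and CM: "C \<subseteq> M" and SM: "\<Union>S \<subseteq> M" and conM: "connected_on Adj M" and cM: "2 \<le> card M"
    and bound: "card M + 2 * card S \<le> card C + sum card S + 1"
    using core[OF sg ch EH CE cC yV yE cy] by blast
  have finH: "finite H" using finite_H[OF sg ch] .
  have finV: "finite V" using sg unfolding simple_graph_def by auto
  have Hprops: "\<forall>F\<in>H. F \<subseteq> V \<and> 2 \<le> card F \<and> connected_on Adj F"
    and cover: "\<forall>u\<in>V. \<forall>v\<in>V. u \<noteq> v \<and> \<not> Adj u v \<longrightarrow> (\<exists>F\<in>H. u \<in> F \<and> v \<in> F)"
    using ch unfolding connecting_hypergraph_def by auto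
  define K where "K = insert E S"
  define H' where "H' = insert M (H - K)"
  have KH: "K \<subseteq> H" using SH EH unfolding K_def by auto
  have finS: "finite S" by (rule finite_subset[OF SH finH])
  have ch': "connecting_hypergraph V Adj H'"
    unfolding connecting_hypergraph_def
  proof (rule conjI)
    show "\<forall>G\<in>H'. G \<subseteq> V \<and> 2 \<le> card G \<and> connected_on Adj G"
    proof
    fix G assume "G \<in> H'"
    then show "G \<subseteq> V \<and> 2 \<le> card G \<and> connected_on Adj G" using Hprops MV cM conM
      unfolding H'_def by auto
    qed
  next
    show "\<forall>u\<in>V. \<forall>v\<in>V. u \<noteq> v \<and> \<not> Adj u v \<longrightarrow> (\<exists>F\<in>H'. u \<in> F \<and> v \<in> F)"
    proof (intro ballI impI)
    fix u v assume uv: "u \<in> V" "v \<in> V" "u \<noteq> v \<and> \<not> Adj u v"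
    then obtain G where G: "G \<in> H" "u \<in> G" "v \<in> G" using cover by blast
    show "\<exists>G\<in>H'. u \<in> G \<and> v \<in> G"
    proof (cases "G \<in> K")
      case True
      then have "u \<in> M \<and> v \<in> M"
      proof (cases "G = E")
        case True
        then have "u \<in> C" "v \<in> C" using inC G uv unfolding compl_adj_def by auto
        then show ?thesis using CM by auto
      next
        case False
        then have "G \<in> S" using \<open>G \<in> K\<close> unfolding K_def by auto
        then show ?thesis using SM G by auto
      qed
      then show ?thesis unfolding H'_def by auto
    next
      case False then show ?thesis using G unfolding H'_def by auto
    qed
    qed
  qed
  have S2: "\<forall>F\<in>S. 2 \<le> card F" using SH Hprops by auto
  have sm: "hcost S + 2 * card S = sum card S" using sum_minus2[OF finS S2] .
  have hK: "hcost K = (card E - 2) + hcost S" unfolding K_def hcost_def using ES finS by simp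
  have hH: "hcost H = hcost (H - K) + hcost K" using hcost_split[OF finH KH] .
  have finHK: "finite (H - K)" using finH by auto
  have hH': "hcost H' \<le> (card M - 2) + hcost (H - K)" unfolding H'_def using hcost_insert_le[OF finHK] .
  have finE: "finite E" by (rule finite_subset[OF _ finV]) (use EH Hprops in auto)
  have "C \<subset> E" using CE wE wC by auto
  then have "card C < card E" by (rule psubset_card_mono[OF finE])
  then have CEc: "card C + 1 \<le> card E" by simp
  have E2: "2 \<le> card E" using EH Hprops by auto
  have "hcost H' \<le> hcost H" using hH hH' hK sm bound CEc E2 cM by linarith
  moreover have "card H' < card H"
  proof -
    have cK: "card K = card S + 1" unfolding K_def using ES finS by simp
    have "card S \<ge> 1" using Sne finS by (simp add: Suc_leI card_gt_0_iff)
    have "card (H - K) = card H - card K" using card_Diff_subset[OF finite_subset[OF KH finH] KH] .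
    moreover have "card K \<le> card H" using card_mono[OF finH KH] .
    moreover have "card H' \<le> card (H - K) + 1" unfolding H'_def using finHK card_insert_le_m1
      by (simp add: card_insert_if)
    ultimately show ?thesis using cK \<open>card S \<ge> 1\<close> by linarith
  qed
  ultimately show ?thesis using ch' by blast
qed

lemma split_edge:
  assumes sg: "simple_graph V Adj" and ch: "connecting_hypergraph V Adj H"
    and EH: "E \<in> H" and CE: "C \<subseteq> E" and uC: "u \<in> C" and wE: "w \<in> E" and wC: "w \<notin> C"
    and closed: "\<forall>s\<in>C. \<forall>t\<in>E - C. \<not> compl_adj Adj s t \<and> \<not> compl_adj Adj t s"
    and cC: "c \<in> C" and yV: "y \<in> V" and yE: "y \<notin> E" and cy: "compl_adj Adj c y"
  shows "\<exists>H1. connecting_hypergraph V Adj H1 \<and> hcost H1 \<le> hcost H \<and> card H1 \<le> card H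
           \<and> insert u (E - C) \<in> H1"
proof -
  obtain S M where SH: "S \<subseteq> H" and ES: "E \<notin> S" and Sne: "S \<noteq> {}" and MV: "M \<subseteq> V"
    and CM: "C \<subseteq> M" and SM: "\<Union>S \<subseteq> M" and conM: "connected_on Adj M" and cM: "2 \<le> card M"
    and bound: "card M + 2 * card S \<le> card C + sum card S + 1"
    using core[OF sg ch EH CE cC yV yE cy] by blast
  have finH: "finite H" using finite_H[OF sg ch] .
  have finV: "finite V" and sym: "\<forall>u v. Adj u v \<longrightarrow> Adj v u" using sg unfolding simple_graph_def by auto
  have Hprops: "\<forall>F\<in>H. F \<subseteq> V \<and> 2 \<le> card F \<and> connected_on Adj F"
    and cover: "\<forall>u\<in>V. \<forall>v\<in>V. u \<noteq> v \<and> \<not> Adj u v \<longrightarrow> (\<exists>F\<in>H. u \<in> F \<and> v \<in> F)"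
    using ch unfolding connecting_hypergraph_def by auto
  define E2 where "E2 = insert u (E - C)"
  define K where "K = insert E S"
  define H1 where "H1 = insert E2 (insert M (H - K))"
  have KH: "K \<subseteq> H" using SH EH unfolding K_def by auto
  have finS: "finite S" by (rule finite_subset[OF SH finH])
  have EV: "E \<subseteq> V" using EH Hprops by auto
  have finE: "finite E" by (rule finite_subset[OF EV finV])
  have E2V: "E2 \<subseteq> V" using EV uC CE unfolding E2_def by auto
  have cE2: "card E2 = card (E - C) + 1" unfolding E2_def using finE uC by simp
  have cEC: "card (E - C) = card E - card C" using card_Diff_subset[OF finite_subset[OF CE finE] CE] .
  have "w \<in> E - C" using wE wC by auto
  then have "card (E - C) \<ge> 1" using finE by (metis One_nat_def Suc_leI card_gt_0_iff empty_iff finite_Diff)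
  then have E22: "2 \<le> card E2" using cE2 by simp
  have conE2: "connected_on Adj E2"
  proof (rule star_connected[of u])
    show "u \<in> E2" unfolding E2_def by auto
    show "\<forall>t\<in>E2. t \<noteq> u \<longrightarrow> Adj u t"
    proof (intro ballI impI)
      fix t assume "t \<in> E2" "t \<noteq> u"
      then have "t \<in> E - C" unfolding E2_def by auto
      then show "Adj u t" using closed uC \<open>t \<noteq> u\<close> unfolding compl_adj_def by auto
    qed
    show "\<forall>a b. Adj a b \<longrightarrow> Adj b a" using sym .
  qed
  have ch': "connecting_hypergraph V Adj H1"
    unfolding connecting_hypergraph_def
  proof (rule conjI)
    show "\<forall>G\<in>H1. G \<subseteq> V \<and> 2 \<le> card G \<and> connected_on Adj G"
    proof
    fix G assume "G \<in> H1"
    then show "G \<subseteq> V \<and> 2 \<le> card G \<and> connected_on Adj G" using Hprops MV cM conM E2V E22 conE2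
      unfolding H1_def by auto
    qed
  next
    show "\<forall>u\<in>V. \<forall>v\<in>V. u \<noteq> v \<and> \<not> Adj u v \<longrightarrow> (\<exists>F\<in>H1. u \<in> F \<and> v \<in> F)"
    proof (intro ballI impI)
    fix a b assume uv: "a \<in> V" "b \<in> V" "a \<noteq> b \<and> \<not> Adj a b"
    then obtain G where G: "G \<in> H" "a \<in> G" "b \<in> G" using cover by blast
    have cab: "compl_adj Adj a b" using uv unfolding compl_adj_def by auto
    show "\<exists>G\<in>H1. a \<in> G \<and> b \<in> G"
    proof (cases "G \<in> K")
      case True
      show ?thesis
      proof (cases "G = E")
        case True
        show ?thesis
        proof (cases "a \<in> C")
          case True
          then have "b \<in> C" using closed cab G \<open>G = E\<close> by blast
          then show ?thesis using CM \<open>a \<in> C\<close> unfolding H1_def by auto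
        next
          case False
          then have "b \<notin> C" using closed cab G \<open>G = E\<close> by blast
          then show ?thesis using \<open>a \<notin> C\<close> G \<open>G = E\<close> unfolding H1_def E2_def by auto
        qed
      next
        case False
        then have "G \<in> S" using \<open>G \<in> K\<close> unfolding K_def by auto
        then show ?thesis using SM G unfolding H1_def by auto
      qed
    next
      case False then show ?thesis using G unfolding H1_def by auto
    qed
    qed
  qed
  have S2: "\<forall>F\<in>S. 2 \<le> card F" using SH Hprops by auto
  have sm: "hcost S + 2 * card S = sum card S" using sum_minus2[OF finS S2] .
  have hK: "hcost K = (card E - 2) + hcost S" unfolding K_def hcost_def using ES finS by simp
  have hH: "hcost H = hcost (H - K) + hcost K" using hcost_split[OF finH KH] .
  have finHK: "finite (H - K)" using finH by auto
  have hH1: "hcost H1 \<le> (card E2 - 2) + ((card M - 2) + hcost (H - K))"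
  proof -
    have "hcost H1 \<le> (card E2 - 2) + hcost (insert M (H - K))"
      unfolding H1_def using hcost_insert_le finHK by blast
    moreover have "hcost (insert M (H - K)) \<le> (card M - 2) + hcost (H - K)"
      using hcost_insert_le[OF finHK] .
    ultimately show ?thesis by linarith
  qed
  have CEc: "card C \<le> card E" using card_mono[OF finE CE] .
  have "finite C" by (rule finite_subset[OF CE finE])
  then have C1: "card C \<ge> 1" using uC by (metis One_nat_def Suc_leI card_gt_0_iff empty_iff)
  have E2: "2 \<le> card E" using EH Hprops by auto
  have "hcost H1 \<le> hcost H" using hH hH1 hK sm bound CEc E2 cM cE2 cEC C1 E22 by linarith
  moreover have "card H1 \<le> card H"
  proof -
    have cK: "card K = card S + 1" unfolding K_def using ES finS by simp
    have "card S \<ge> 1" using Sne finS by (simp add: Suc_leI card_gt_0_iff)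
    have "card (H - K) = card H - card K" using card_Diff_subset[OF finite_subset[OF KH finH] KH] .
    moreover have "card K \<le> card H" using card_mono[OF finH KH] .
    moreover have "card H1 \<le> card (H - K) + 2" unfolding H1_def using finHK
      by (simp add: card_insert_if)
    ultimately show ?thesis using cK \<open>card S \<ge> 1\<close> by linarith
  qed
  moreover have "E2 \<in> H1" unfolding H1_def by auto
  ultimately show ?thesis using ch' unfolding E2_def by blast
qed

lemma replace_edge:
  assumes sg: "simple_graph V Adj" and ch: "connecting_hypergraph V Adj H"
    and EH: "E \<in> H" and DE: "D \<subseteq> E" and wE: "w \<in> E" and wD: "w \<notin> D"
    and D2: "2 \<le> card D" and conD: "connected_on Adj D"
    and inD: "\<forall>s\<in>E. \<forall>t\<in>E. compl_adj Adj s t \<longrightarrow> s \<in> D \<and> t \<in> D"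
  shows "\<exists>H'. connecting_hypergraph V Adj H' \<and> hcost H' < hcost H"
proof -
  have finH: "finite H" using finite_H[OF sg ch] .
  have finV: "finite V" using sg unfolding simple_graph_def by auto
  have Hprops: "\<forall>F\<in>H. F \<subseteq> V \<and> 2 \<le> card F \<and> connected_on Adj F"
    and cover: "\<forall>u\<in>V. \<forall>v\<in>V. u \<noteq> v \<and> \<not> Adj u v \<longrightarrow> (\<exists>F\<in>H. u \<in> F \<and> v \<in> F)"
    using ch unfolding connecting_hypergraph_def by auto
  define H' where "H' = insert D (H - {E})"
  have EV: "E \<subseteq> V" using EH Hprops by auto
  have ch': "connecting_hypergraph V Adj H'"
    unfolding connecting_hypergraph_def
  proof (rule conjI)
    show "\<forall>G\<in>H'. G \<subseteq> V \<and> 2 \<le> card G \<and> connected_on Adj G"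
    proof
    fix G assume "G \<in> H'"
    then show "G \<subseteq> V \<and> 2 \<le> card G \<and> connected_on Adj G" using Hprops D2 conD DE EV
      unfolding H'_def by auto
    qed
  next
    show "\<forall>u\<in>V. \<forall>v\<in>V. u \<noteq> v \<and> \<not> Adj u v \<longrightarrow> (\<exists>F\<in>H'. u \<in> F \<and> v \<in> F)"
    proof (intro ballI impI)
    fix a b assume uv: "a \<in> V" "b \<in> V" "a \<noteq> b \<and> \<not> Adj a b"
    then obtain G where G: "G \<in> H" "a \<in> G" "b \<in> G" using cover by blast
    show "\<exists>G\<in>H'. a \<in> G \<and> b \<in> G"
    proof (cases "G = E")
      case True
      then have "a \<in> D" "b \<in> D" using inD G uv unfolding compl_adj_def by auto
      then show ?thesis unfolding H'_def by auto
    next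
      case False then show ?thesis using G unfolding H'_def by auto
    qed
    qed
  qed
  have finE: "finite E" by (rule finite_subset[OF EV finV])
  have "D \<subset> E" using DE wE wD by auto
  then have "card D < card E" using finE psubset_card_mono by blast
  moreover have "hcost H = hcost (H - {E}) + (card E - 2)" using hcost_split[OF finH, of "{E}"] EH
    unfolding hcost_def by simp
  moreover have "hcost H' \<le> (card D - 2) + hcost (H - {E})" unfolding H'_def
    using hcost_insert_le finH by blast
  ultimately have "hcost H' < hcost H" using D2 by linarith
  then show ?thesis using ch' by blast
qed


theorem lemma6:
  fixes V :: "'a set" and Adj :: "'a \<Rightarrow> 'a \<Rightarrow> bool"
  assumes "simple_graph V Adj"
    and "connected_on Adj V"
    and "2 \<le> card V"
    and "coconnected_on Adj V \<or>
         (\<exists>x. dominating V Adj x \<and> connected_on Adj (V - {x}) \<and> coconnected_on Adj (V - {x}))"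
  shows "\<exists>H. min_cost_connecting_hypergraph V Adj H \<and> (\<forall>E\<in>H. coconnected_on Adj E)"
proof -
  note sg = assms(1)
  have finV: "finite V" and sym: "\<forall>u v. Adj u v \<longrightarrow> Adj v u" using sg unfolding simple_graph_def by auto
  have symc: "\<And>a b. compl_adj Adj a b \<Longrightarrow> compl_adj Adj b a" using sym unfolding compl_adj_def by auto
  obtain V0 where V0V: "V0 \<subseteq> V" and conV0: "connected_on Adj V0" and coV0: "coconnected_on Adj V0"
      and outV0: "\<forall>z\<in>V - V0. \<forall>t\<in>V. \<not> compl_adj Adj z t"
  proof (cases "coconnected_on Adj V")
    case True then show ?thesis using that[of V] assms(2) by auto
  next
    case False
    then obtain x where dx: "dominating V Adj x" and c1: "connected_on Adj (V - {x})"
      and c2: "coconnected_on Adj (V - {x})" using assms(4) by auto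
    have "\<forall>z\<in>V - (V - {x}). \<forall>t\<in>V. \<not> compl_adj Adj z t"
      using dx unfolding dominating_def compl_adj_def by auto
    then show ?thesis using that[of "V - {x}"] c1 c2 by auto
  qed
  have coedge: "\<And>s t. s \<in> V \<Longrightarrow> t \<in> V \<Longrightarrow> compl_adj Adj s t \<Longrightarrow> s \<in> V0 \<and> t \<in> V0"
    using outV0 symc by blast
  define P where "P = connecting_hypergraph V Adj"
  have PV: "P {V}" unfolding P_def connecting_hypergraph_def using assms(2,3) by auto
  obtain H0 where H0: "P H0" and H0min: "\<forall>H'. P H' \<longrightarrow> hcost H0 \<le> hcost H'"
    using ex_has_least_nat[of P "{V}" hcost] PV by blast
  obtain H where HP: "P H \<and> hcost H = hcost H0"
    and Hmin: "\<forall>H'. P H' \<and> hcost H' = hcost H0 \<longrightarrow> card H \<le> card H'"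
    using ex_has_least_nat[of "\<lambda>H. P H \<and> hcost H = hcost H0" H0 card] H0 by blast
  have ch: "connecting_hypergraph V Adj H" using HP P_def by auto
  have best: "\<And>H'. connecting_hypergraph V Adj H' \<Longrightarrow> hcost H \<le> hcost H'"
    using H0min HP P_def by auto
  have best2: "\<And>H'. connecting_hypergraph V Adj H' \<Longrightarrow> hcost H' \<le> hcost H \<Longrightarrow> card H \<le> card H'"
  proof -
    fix H' assume a: "connecting_hypergraph V Adj H'" "hcost H' \<le> hcost H"
    then have "hcost H' = hcost H0" using H0min HP P_def by (metis antisym)
    then show "card H \<le> card H'" using Hmin a P_def by auto
  qed
  have Hprops: "\<forall>F\<in>H. F \<subseteq> V \<and> 2 \<le> card F \<and> connected_on Adj F"
    and cover: "\<forall>u\<in>V. \<forall>v\<in>V. u \<noteq> v \<and> \<not> Adj u v \<longrightarrow> (\<exists>F\<in>H. u \<in> F \<and> v \<in> F)"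
    using ch unfolding connecting_hypergraph_def by auto
  have good: "\<forall>E\<in>H. coconnected_on Adj E"
  proof
    fix E assume EH: "E \<in> H"
    show "coconnected_on Adj E"
    proof (rule ccontr)
      assume nco: "\<not> coconnected_on Adj E"
      have EV: "E \<subseteq> V" using Hprops EH by auto
      define rE where "rE = (\<lambda>a b. a \<in> E \<and> b \<in> E \<and> compl_adj Adj a b)"
      from nco obtain a b where aE: "a \<in> E" and bE: "b \<in> E" and nab: "\<not> rE\<^sup>*\<^sup>* a b"
        unfolding coconnected_on_def connected_on_def rE_def by auto
      show False
      proof (cases "\<exists>p\<in>E. \<exists>q\<in>E. compl_adj Adj p q")
        case False
        then obtain H' where "connecting_hypergraph V Adj H'" "hcost H' \<le> hcost H" "card H' < card H"
          using remove_edge[OF sg ch EH] by blast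
        then show False using best2 by fastforce
      next
        case True
        then obtain p q where pE: "p \<in> E" and qE: "q \<in> E" and pq: "compl_adj Adj p q" by auto
        have pV0: "p \<in> V0" "q \<in> V0" using coedge pE qE EV pq by auto
        obtain u w where uE: "u \<in> E" and uV0: "u \<in> V0" and wE: "w \<in> E" and nuw: "\<not> rE\<^sup>*\<^sup>* u w"
        proof (cases "a \<in> V0")
          case True then show ?thesis using that aE bE nab by blast
        next
          case False
          have "\<not> rE\<^sup>*\<^sup>* p a"
          proof
            assume "rE\<^sup>*\<^sup>* p a"
            moreover have "p \<noteq> a" using pV0 False by auto
            ultimately obtain s t where "rE s t" "s \<noteq> a" "\<not> t \<noteq> a"
              using exit_lemma[of rE p a "\<lambda>v. v \<noteq> a"] by blast
            then have "compl_adj Adj a s" "s \<in> V" using symc EV unfolding rE_def by auto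
            then show False using outV0 False aE EV by auto
          qed
          then show ?thesis using that pE pV0 aE by blast
        qed
        define C where "C = {v \<in> E. rE\<^sup>*\<^sup>* u v}"
        have uC: "u \<in> C" using uE unfolding C_def by auto
        have CE: "C \<subseteq> E" unfolding C_def by auto
        have wC: "w \<notin> C" using nuw unfolding C_def by auto
        have CV0: "C \<subseteq> V0"
        proof
          fix v assume "v \<in> C"
          then have "rE\<^sup>*\<^sup>* u v" unfolding C_def by auto
          then show "v \<in> V0"
          proof (induction rule: rtranclp_induct)
            case base then show ?case using uV0 .
          next
            case (step z v)
            then show ?case using coedge EV unfolding rE_def by blast
          qed
        qed
        have closed1: "\<And>s t. s \<in> C \<Longrightarrow> t \<in> E \<Longrightarrow> compl_adj Adj s t \<Longrightarrow> t \<in> C"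
        proof -
          fix s t assume "s \<in> C" "t \<in> E" "compl_adj Adj s t"
          then have "rE\<^sup>*\<^sup>* u s" "rE s t" unfolding C_def rE_def by auto
          then have "rE\<^sup>*\<^sup>* u t" by (rule rtranclp.rtrancl_into_rtrancl)
          then show "t \<in> C" unfolding C_def using \<open>t \<in> E\<close> by auto
        qed
        have closed: "\<forall>s\<in>C. \<forall>t\<in>E - C. \<not> compl_adj Adj s t \<and> \<not> compl_adj Adj t s"
          using closed1 symc by blast
        have finE: "finite E" by (rule finite_subset[OF EV finV])
        show False
        proof (cases "V0 \<subseteq> C")
          case True
          then have CV: "C = V0" using CV0 by auto
          have "{p, q} \<subseteq> C" using pV0 CV by auto
          moreover have "p \<noteq> q" using pq unfolding compl_adj_def by auto
          moreover have "finite C" by (rule finite_subset[OF CE finE])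
          ultimately have C2: "2 \<le> card C" using card_mono[of C "{p, q}"] by auto
          have inC: "\<forall>s\<in>E. \<forall>t\<in>E. compl_adj Adj s t \<longrightarrow> s \<in> C \<and> t \<in> C"
            using coedge EV CV by blast
          have conC: "connected_on Adj C" using conV0 CV by simp
          obtain H' where "connecting_hypergraph V Adj H'" "hcost H' < hcost H"
            using replace_edge[OF sg ch EH CE wE wC C2 conC inC] by blast
          then show False using best by fastforce
        next
          case False
          then obtain z where zV0: "z \<in> V0" "z \<notin> C" by auto
          have "(\<lambda>a b. a \<in> V0 \<and> b \<in> V0 \<and> compl_adj Adj a b)\<^sup>*\<^sup>* u z"
            using coV0 uV0 zV0 unfolding coconnected_on_def connected_on_def by auto
          then obtain c y where st: "c \<in> V0 \<and> y \<in> V0 \<and> compl_adj Adj c y" and cC: "c \<in> C" and yC: "y \<notin> C"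
            using exit_lemma[of _ u z "\<lambda>v. v \<in> C"] uC zV0 by blast
          have cy: "compl_adj Adj c y" using st by auto
          have yV: "y \<in> V" using st V0V by auto
          have yE: "y \<notin> E" using closed1 cC cy yC by blast
          obtain H1 where ch1: "connecting_hypergraph V Adj H1" and h1: "hcost H1 \<le> hcost H"
            and c1: "card H1 \<le> card H" and E2H1: "insert u (E - C) \<in> H1"
            using split_edge[OF sg ch EH CE uC wE wC closed cC yV yE cy] by blast
          show False
          proof (cases "\<exists>p'\<in>E - C. \<exists>q'\<in>E - C. compl_adj Adj p' q'")
            case False
            have "\<forall>s\<in>insert u (E - C). \<forall>t\<in>insert u (E - C). \<not> compl_adj Adj s t"
            proof (intro ballI)
              fix s t assume s: "s \<in> insert u (E - C)" and t: "t \<in> insert u (E - C)"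
              show "\<not> compl_adj Adj s t"
              proof (cases "s = u")
                case True
                then show ?thesis
                proof (cases "t = u")
                  case True then show ?thesis using \<open>s = u\<close> unfolding compl_adj_def by simp
                next
                  case False then show ?thesis using \<open>s = u\<close> t closed uC by auto
                qed
              next
                case sF: False
                then have sE: "s \<in> E - C" using s by auto
                show ?thesis
                proof (cases "t = u")
                  case True then show ?thesis using sE closed uC by auto
                next
                  case False then show ?thesis using sE t \<open>\<not> (\<exists>p'\<in>E - C. \<exists>q'\<in>E - C. compl_adj Adj p' q')\<close> by auto
                qed
              qed
            qed
            then obtain H2 where "connecting_hypergraph V Adj H2" "hcost H2 \<le> hcost H1" "card H2 < card H1"
              using remove_edge[OF sg ch1 E2H1] by blast
            then show False using best2 h1 c1 by fastforce
          next
            case True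
            then obtain p' q' where p': "p' \<in> E - C" and q': "q' \<in> E - C" and pq': "compl_adj Adj p' q'" by auto
            have p'V0: "p' \<in> V0" using coedge p' q' EV pq' by auto
            have "(\<lambda>a b. a \<in> V0 \<and> b \<in> V0 \<and> compl_adj Adj a b)\<^sup>*\<^sup>* p' u"
              using coV0 uV0 p'V0 unfolding coconnected_on_def connected_on_def by auto
            moreover have "u \<notin> E - C" using uC by auto
            ultimately obtain c' y' where st': "c' \<in> V0 \<and> y' \<in> V0 \<and> compl_adj Adj c' y'"
              and c'C: "c' \<in> E - C" and y'C: "y' \<notin> E - C"
              using exit_lemma[of _ p' u "\<lambda>v. v \<in> E - C"] p' by blast
            have c'y': "compl_adj Adj c' y'" using st' by auto
            have y'V: "y' \<in> V" using st' V0V by auto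
            have "y' \<noteq> u" using closed uC c'C c'y' by blast
            then have y'E2: "y' \<notin> insert u (E - C)" using y'C by auto
            have inC2: "\<forall>s\<in>insert u (E - C). \<forall>t\<in>insert u (E - C). compl_adj Adj s t \<longrightarrow> s \<in> E - C \<and> t \<in> E - C"
            proof (intro ballI impI)
              fix s t assume s: "s \<in> insert u (E - C)" and t: "t \<in> insert u (E - C)" and st: "compl_adj Adj s t"
              have "s \<noteq> u \<or> t \<noteq> u" using st unfolding compl_adj_def by auto
              moreover have "s = u \<Longrightarrow> t \<in> E - C \<Longrightarrow> False" using closed uC st by auto
              moreover have "t = u \<Longrightarrow> s \<in> E - C \<Longrightarrow> False" using closed uC st by auto
              ultimately show "s \<in> E - C \<and> t \<in> E - C" using s t by auto
            qed
            have sub: "E - C \<subseteq> insert u (E - C)" by auto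
            have uins: "u \<in> insert u (E - C)" by auto
            obtain H2 where "connecting_hypergraph V Adj H2" "hcost H2 \<le> hcost H1" "card H2 < card H1"
              using absorb[OF sg ch1 E2H1 sub uins \<open>u \<notin> E - C\<close> inC2 c'C y'V y'E2 c'y'] by blast
            then show False using best2 h1 c1 by fastforce
          qed
        qed
      qed
    qed
  qed
  show ?thesis unfolding min_cost_connecting_hypergraph_def using ch best good by blast
qed

end
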